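(* Let $t$ and $n$ be positive integers. (1) If $t+2\equiv 0 \pmod 6$ and $t+2$ divides $n$, then $ex_3(n,Tr(K_{1,t}))=\frac{n}{6}(t^2-2)$. (2) If $t+2\equiv 1$ or $3 \pmod 6$ and $t+2$ divides $n$, then $ex_3(n,Tr(K_{1,t}))=\frac{n}{6}(t^2-1)$.
   Context: For a graph $F$ with vertex set $\{v_1,\dots,v_p\}$ and edge set $\{e_1,\dots,e_q\}$, a hypergraph $\mathcal{H}$ contains $F$ as a trace if there exist distinct vertices $w_1,\dots,w_p\in V(\mathcal{H})$ and distinct edges $f_1,\dots,f_q\in E(\mathcal{H})$ such that whenever $e_i=v_\alpha v_\beta$, we have $f_i\cap\{w_1,\dots,w_p\}=\{w_\alpha,w_\beta\}$. For $r\ge 2$, $ex_r(n,Tr(F))$ denotes the maximum number of edges of an $n$-vertex $r$-uniform hypergraph that does not contain $F$ as a trace. $K_{1,t}$ is the star with $t$ edges. *)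

theory Defs
  imports Complex_Main
begin

text \<open>A graph F is given by a vertex set VF and an edge set EF (2-element subsets of VF).\<close>
definition contains_trace :: "'a set set \<Rightarrow> 'v set \<Rightarrow> 'v set set \<Rightarrow> bool" where
  "contains_trace H VF EF \<longleftrightarrow>
     (\<exists>w f. inj_on w VF \<and> inj_on f EF \<and>
        (\<forall>e\<in>EF. f e \<in> H \<and> f e \<inter> w ` VF = w ` e))"

definition uniform_hypergraph :: "nat \<Rightarrow> nat \<Rightarrow> nat set set \<Rightarrow> bool" where
  "uniform_hypergraph n r H \<longleftrightarrow> (\<forall>e\<in>H. e \<subseteq> {0..<n} \<and> card e = r)"

definition ex_trace :: "nat \<Rightarrow> nat \<Rightarrow> 'v set \<Rightarrow> 'v set set \<Rightarrow> nat" where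
  "ex_trace r n VF EF =
     Max {card H | H. uniform_hypergraph n r H \<and> \<not> contains_trace H VF EF}"

definition star_V :: "nat \<Rightarrow> nat set" where
  "star_V t = {0..t}"
definition star_E :: "nat \<Rightarrow> nat set set" where
  "star_E t = {{0, i} | i. i \<in> {1..t}}"

end

theory Submission
  imports Defs
begin

lemma card_filter_sum:
  assumes "finite A"
  shows "card {y\<in>A. P y} = (\<Sum>y\<in>A. if P y then 1 else 0)"
  using assms by (simp add: sum.inter_filter[symmetric])

lemma card_swap_count:
  fixes B :: "'a set" and A :: "'a set"
  assumes "finite A" "finite B" "\<forall>x y. adj x y \<longrightarrow> adj y x"
  shows "(\<Sum>x\<in>B. card {y\<in>A. adj x y}) = (\<Sum>a\<in>A. card {x\<in>B. adj a x})"
proof -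
  have "(\<Sum>x\<in>B. card {y\<in>A. adj x y}) = (\<Sum>x\<in>B. \<Sum>y\<in>A. if adj x y then 1 else 0)"
    using assms by (simp add: card_filter_sum)
  also have "\<dots> = (\<Sum>y\<in>A. \<Sum>x\<in>B. if adj x y then 1 else 0)"
    by (rule sum.swap)
  also have "\<dots> = (\<Sum>a\<in>A. card {x\<in>B. adj a x})"
    using assms by (auto simp add: card_filter_sum intro!: sum.cong)
  finally show ?thesis .
qed

lemma vizing:
  fixes adj :: "'a \<Rightarrow> 'a \<Rightarrow> bool"
  assumes "finite V" "\<forall>x y. adj x y \<longrightarrow> adj y x" "\<forall>x. \<not> adj x x"
    "\<forall>U \<subseteq> V. (\<forall>u\<in>U. \<exists>x\<in>V-U. adj u x) \<longrightarrow> card U \<le> m"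
  shows "(\<Sum>x\<in>V. card {y\<in>V. adj x y}) \<le> m*(m+2)"
  using assms
proof (induction "card V" arbitrary: V m rule: less_induct)
  case less
  note fin = less.prems(1) and sym = less.prems(2) and irr = less.prems(3) and val = less.prems(4)
  show ?case
  proof (cases "\<exists>x\<in>V. \<exists>y\<in>V. adj x y")
    case False
    then have "\<forall>x\<in>V. {y\<in>V. adj x y} = {}" by auto
    then have "(\<Sum>x\<in>V. card {y\<in>V. adj x y}) = 0"
    proof (intro sum.neutral ballI)
      fix x assume xV: "x \<in> V" and h: "\<forall>x\<in>V. {y\<in>V. adj x y} = {}"
      then have "{y\<in>V. adj x y} = {}" by blast
      then show "card {y\<in>V. adj x y} = 0" by (simp only: card.empty)
    qed
    then show ?thesis by simp
  next
    case True
    define d where "d x = card {y\<in>V. adj x y}" for x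
    have "V \<noteq> {}" using True by auto
    then have "Max (d ` V) \<in> d ` V" using fin by simp
    then obtain v where vV: "v \<in> V" and vmax: "d v = Max (d ` V)" by auto
    have dmax: "\<And>x. x \<in> V \<Longrightarrow> d x \<le> d v" using vmax fin by simp
    define A where "A = {y\<in>V. adj v y}"
    define D where "D = card A"
    have DA: "d v = D" unfolding d_def A_def D_def by simp
    define B where "B = V - A - {v}"
    have vA: "v \<notin> A" using irr A_def by auto
    have finA: "finite A" "finite B" using fin A_def B_def by auto
    have AV: "A \<subseteq> V" using A_def by auto
    have Dm: "D \<le> m"
      unfolding D_def
      apply (rule val[rule_format, OF AV])
      using vV vA sym A_def by auto
    have IH: "(\<Sum>x\<in>B. card {y\<in>B. adj x y}) \<le> (m-D)*((m-D)+2)"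
    proof (rule less.hyps)
      show "card B < card V" using fin vV B_def by (intro psubset_card_mono) auto
      show "finite B" by (fact finA(2))
      show "\<forall>x y. adj x y \<longrightarrow> adj y x" by (fact sym)
      show "\<forall>x. \<not> adj x x" by (fact irr)
      show "\<forall>U\<subseteq>B. (\<forall>u\<in>U. \<exists>x\<in>B - U. adj u x) \<longrightarrow> card U \<le> m - D"
      proof (intro allI impI)
        fix U assume UB: "U \<subseteq> B" and Uv: "\<forall>u\<in>U. \<exists>x\<in>B - U. adj u x"
        have "U \<union> A \<subseteq> V" using UB AV B_def by auto
        moreover have "\<forall>u\<in>U \<union> A. \<exists>x\<in>V - (U \<union> A). adj u x"
        proof
          fix u assume "u \<in> U \<union> A"
          then show "\<exists>x\<in>V - (U \<union> A). adj u x"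
          proof
            assume "u \<in> U"
            then obtain x where "x \<in> B - U" "adj u x" using Uv by auto
            then show ?thesis using B_def by auto
          next
            assume "u \<in> A"
            then show ?thesis using vV vA UB B_def sym A_def by auto
          qed
        qed
        ultimately have "card (U \<union> A) \<le> m" using val by blast
        moreover have "card (U \<union> A) = card U + card A"
          using UB B_def finA by (intro card_Un_disjoint) (auto intro: finite_subset)
        ultimately show "card U \<le> m - D" using D_def by simp
      qed
    qed
    have ea: "card {x\<in>B. adj a x} + D \<le> m + 1" if aA: "a \<in> A" for a
    proof -
      let ?U = "(A - {a}) \<union> {x\<in>B. adj a x}"
      have "?U \<subseteq> V" using AV B_def by auto
      moreover have "\<forall>u\<in>?U. \<exists>x\<in>V - ?U. adj u x"
      proof
        fix u assume "u \<in> ?U"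
        then show "\<exists>x\<in>V - ?U. adj u x"
        proof
          assume "u \<in> A - {a}"
          then show ?thesis using vV vA B_def sym A_def by auto
        next
          assume "u \<in> {x\<in>B. adj a x}"
          then show ?thesis using aA AV B_def sym by auto
        qed
      qed
      ultimately have "card ?U \<le> m" using val by blast
      moreover have "card ?U = card (A - {a}) + card {x\<in>B. adj a x}"
        using B_def finA by (intro card_Un_disjoint) auto
      moreover have "card (A - {a}) + 1 = D" using aA finA(1) unfolding D_def
        by (metis card_Suc_Diff1 Suc_eq_plus1)
      ultimately show ?thesis by simp
    qed
    have dB: "d x = card {y\<in>B. adj x y} + card {y\<in>A. adj x y}" if xB: "x \<in> B" for x
    proof -
      have "{y\<in>V. adj x y} = {y\<in>B. adj x y} \<union> {y\<in>A. adj x y}"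
        using xB B_def A_def sym AV by auto
      moreover have "card ({y\<in>B. adj x y} \<union> {y\<in>A. adj x y}) = card {y\<in>B. adj x y} + card {y\<in>A. adj x y}"
        using finA B_def by (intro card_Un_disjoint) auto
      ultimately show ?thesis unfolding d_def by simp
    qed
    have Vsplit: "V = insert v (A \<union> B)" using vV AV B_def by auto
    have vAB: "v \<notin> A \<union> B" and ABd: "A \<inter> B = {}" using vA B_def by auto
    have "(\<Sum>x\<in>V. d x) = (\<Sum>x\<in>insert v (A \<union> B). d x)" using Vsplit by simp
    also have "\<dots> = d v + (\<Sum>x\<in>A \<union> B. d x)" using vAB finA by (simp add: sum.insert)
    also have "(\<Sum>x\<in>A \<union> B. d x) = (\<Sum>x\<in>A. d x) + (\<Sum>x\<in>B. d x)"
      using ABd finA by (simp add: sum.union_disjoint)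
    finally have "(\<Sum>x\<in>V. d x) = d v + (\<Sum>x\<in>A. d x) + (\<Sum>x\<in>B. d x)" by simp
    also have "(\<Sum>x\<in>B. d x) = (\<Sum>x\<in>B. card {y\<in>B. adj x y}) + (\<Sum>x\<in>B. card {y\<in>A. adj x y})"
      using dB by (simp add: sum.distrib)
    also have "(\<Sum>x\<in>B. card {y\<in>A. adj x y}) = (\<Sum>a\<in>A. card {x\<in>B. adj a x})"
      using card_swap_count finA sym by blast
    also have "(\<Sum>a\<in>A. card {x\<in>B. adj a x}) \<le> (\<Sum>a\<in>A. m + 1 - D)"
      using ea by (intro sum_mono) (metis add_diff_cancel_right' diff_le_mono)
    also have "(\<Sum>x\<in>A. d x) \<le> (\<Sum>x\<in>A. D)"
      using dmax DA AV by (intro sum_mono) auto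
    finally have "(\<Sum>x\<in>V. d x) \<le> D + D*D + (m-D)*((m-D)+2) + D*(m+1-D)"
      using IH DA D_def by simp
    also have "\<dots> \<le> m*(m+2)"
    proof -
      obtain r where r: "m = D + r" using Dm le_Suc_ex by blast
      show ?thesis unfolding r by (simp add: algebra_simps)
    qed
    finally show ?thesis unfolding d_def .
  qed
qed

lemma star_E_mem: "e \<in> star_E t \<longleftrightarrow> (\<exists>i. i \<in> {1..t} \<and> e = {0, i})"
  unfolding star_E_def by auto

lemma trace_imp:
  assumes unif: "uniform_hypergraph n 3 H" and tr: "contains_trace H (star_V t) (star_E t)"
  shows "\<exists>c U. c \<notin> U \<and> finite U \<and> card U = t \<and> (\<forall>u\<in>U. \<exists>x. x \<notin> U \<and> x \<noteq> c \<and> {c,u,x} \<in> H)"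
proof -
  obtain w f where winj: "inj_on w {0..t}" and finj: "inj_on f (star_E t)"
    and fe: "\<forall>e\<in>star_E t. f e \<in> H \<and> f e \<inter> w ` {0..t} = w ` e"
    using tr unfolding contains_trace_def star_V_def by blast
  define c where "c = w 0"
  define U where "U = w ` {1..t}"
  have cU: "c \<notin> U" using winj unfolding c_def U_def inj_on_def by fastforce
  have cardU: "card U = t" unfolding U_def
    using winj by (subst card_image) (auto intro: inj_on_subset)
  have "\<forall>u\<in>U. \<exists>x. x \<notin> U \<and> x \<noteq> c \<and> {c,u,x} \<in> H"
  proof
    fix u assume "u \<in> U"
    then obtain i where i: "i \<in> {1..t}" "u = w i" unfolding U_def by auto
    have e: "{0,i} \<in> star_E t" using i star_E_mem by blast
    have fH: "f {0,i} \<in> H" and fint: "f {0,i} \<inter> w ` {0..t} = {c, u}"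
      using fe e i c_def by auto
    have c3: "card (f {0,i}) = 3" and fin: "finite (f {0,i})"
      using unif fH unfolding uniform_hypergraph_def by (auto intro: finite_subset)
    have cu: "c \<noteq> u" using cU \<open>u \<in> U\<close> by auto
    have sub: "{c,u} \<subseteq> f {0,i}" using fint by auto
    have "f {0,i} - {c,u} \<noteq> {}"
    proof
      assume "f {0,i} - {c,u} = {}"
      then have "f {0,i} \<subseteq> {c,u}" by auto
      then have "card (f {0,i}) \<le> card {c,u}" by (intro card_mono) auto
      then show False using c3 cu by simp
    qed
    then obtain x where x: "x \<in> f {0,i}" "x \<noteq> c" "x \<noteq> u" by auto
    have xw: "x \<notin> w ` {0..t}" using fint x by auto
    have "{c,u,x} \<subseteq> f {0,i}" using sub x by auto
    moreover have "card {c,u,x} = 3" using cu x by auto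
    ultimately have "{c,u,x} = f {0,i}" using c3 fin by (intro card_subset_eq) auto
    then have "{c,u,x} \<in> H" using fH by simp
    moreover have "x \<notin> U" using xw unfolding U_def by auto
    ultimately show "\<exists>x. x \<notin> U \<and> x \<noteq> c \<and> {c,u,x} \<in> H" using x by blast
  qed
  moreover have "finite U" unfolding U_def by simp
  ultimately show ?thesis using cU cardU by blast
qed

lemma imp_trace:
  assumes cU: "c \<notin> U" and finU: "finite U" and cardU: "card U = t"
    and ex: "\<forall>u\<in>U. \<exists>x. x \<notin> U \<and> x \<noteq> c \<and> {c,u,x} \<in> H"
  shows "contains_trace H (star_V t) (star_E t)"
proof -
  obtain h where h: "bij_betw h {0..<t} U" using ex_bij_betw_nat_finite[OF finU] cardU by auto
  define w where "w i = (if i = 0 then c else h (i - 1))" for i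
  define xx where "xx u = (SOME x. x \<notin> U \<and> x \<noteq> c \<and> {c,u,x} \<in> H)" for u
  have xx: "xx u \<notin> U \<and> xx u \<noteq> c \<and> {c,u,xx u} \<in> H" if "u \<in> U" for u
    using ex that unfolding xx_def by (metis (mono_tags, lifting) someI_ex)
  define f where "f e = insert c (\<Union>i\<in>e-{0}. {w i, xx (w i)})" for e
  have wU: "w ` {1..t} = U"
  proof -
    have "w ` {1..t} = h ` {0..<t}"
    proof
      show "w ` {1..t} \<subseteq> h ` {0..<t}" unfolding w_def by auto
      show "h ` {0..<t} \<subseteq> w ` {1..t}"
      proof
        fix y assume "y \<in> h ` {0..<t}"
        then obtain j where "j < t" "y = h j" by auto
        then have "y = w (Suc j)" "Suc j \<in> {1..t}" unfolding w_def by auto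
        then show "y \<in> w ` {1..t}" by blast
      qed
    qed
    then show ?thesis using h unfolding bij_betw_def by simp
  qed
  have wi: "w i \<in> U" if "i \<in> {1..t}" for i using wU that by blast
  have winj: "inj_on w {0..t}"
  proof (rule inj_onI)
    fix i j assume ij: "i \<in> {0..t}" "j \<in> {0..t}" "w i = w j"
    show "i = j"
    proof (cases "i = 0"; cases "j = 0")
      assume "i \<noteq> 0" "j \<noteq> 0"
      then have "h (i-1) = h (j-1)" using ij w_def by simp
      moreover have "i - 1 \<in> {0..<t}" "j - 1 \<in> {0..<t}" using ij \<open>i \<noteq> 0\<close> \<open>j \<noteq> 0\<close> by auto
      ultimately have "i - 1 = j - 1" using h unfolding bij_betw_def inj_on_def by blast
      then show ?thesis using \<open>i \<noteq> 0\<close> \<open>j \<noteq> 0\<close> by simp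
    next
      assume "i = 0" "j \<noteq> 0"
      then show ?thesis using ij wi[of j] cU w_def by auto
    next
      assume "i \<noteq> 0" "j = 0"
      then show ?thesis using ij wi[of i] cU w_def by auto
    qed simp
  qed
  have wall: "w ` {0..t} = insert c U"
  proof -
    have "{0..t} = insert 0 {1..t}" by auto
    then have "w ` {0..t} = insert (w 0) (w ` {1..t})" by simp
    then show ?thesis using wU w_def by simp
  qed
  have fi: "f {0,i} = {c, w i, xx (w i)}" if "i \<in> {1..t}" for i
  proof -
    have "{0,i} - {0} = {i}" using that by auto
    then show ?thesis unfolding f_def by auto
  qed
  have fint: "f {0,i} \<inter> w ` {0..t} = {c, w i}" if "i \<in> {1..t}" for i
    using fi[OF that] wall xx[OF wi[OF that]] wi[OF that] by auto
  have "inj_on f (star_E t)"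
  proof (rule inj_onI)
    fix e1 e2 assume "e1 \<in> star_E t" "e2 \<in> star_E t" "f e1 = f e2"
    then obtain i j where i: "i \<in> {1..t}" "e1 = {0,i}" and j: "j \<in> {1..t}" "e2 = {0,j}"
      and eq: "f {0,i} = f {0,j}" using star_E_mem by metis
    have "{c, w i} = {c, w j}" using fint[OF i(1)] fint[OF j(1)] eq by simp
    moreover have "w i \<noteq> c" "w j \<noteq> c" using wi i j cU by auto
    ultimately have "w i = w j" by (metis doubleton_eq_iff)
    then have "i = j" using winj i j unfolding inj_on_def by auto
    then show "e1 = e2" using i j by simp
  qed
  moreover have "\<forall>e\<in>star_E t. f e \<in> H \<and> f e \<inter> w ` star_V t = w ` e"
  proof
    fix e assume "e \<in> star_E t"
    then obtain i where i: "i \<in> {1..t}" "e = {0,i}" using star_E_mem by metis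
    have "f e \<in> H" using fi[OF i(1)] xx[OF wi[OF i(1)]] i(2) by simp
    moreover have "f e \<inter> w ` star_V t = w ` e" using fint[OF i(1)] i(2) w_def
      unfolding star_V_def by simp
    ultimately show "f e \<in> H \<and> f e \<inter> w ` star_V t = w ` e" by simp
  qed
  ultimately show ?thesis unfolding contains_trace_def star_V_def using winj by blast
qed

lemma incidence_sum:
  assumes "finite V" "finite E"
  shows "(\<Sum>x\<in>V. card {e\<in>E. x \<in> e}) = (\<Sum>e\<in>E. card (V \<inter> e))"
proof -
  have "(\<Sum>x\<in>V. card {e\<in>E. x \<in> e}) = (\<Sum>x\<in>V. \<Sum>e\<in>E. if x \<in> e then 1 else 0)"
    using assms by (simp add: card_filter_sum)
  also have "\<dots> = (\<Sum>e\<in>E. \<Sum>x\<in>V. if x \<in> e then 1 else 0)" by (rule sum.swap)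
  also have "\<dots> = (\<Sum>e\<in>E. card {x\<in>V. x \<in> e})"
    using assms by (simp add: card_filter_sum)
  also have "\<dots> = (\<Sum>e\<in>E. card (V \<inter> e))"
    by (intro sum.cong refl arg_cong[where f=card]) auto
  finally show ?thesis .
qed

lemma three_elem:
  assumes "finite e" "card e = 3" "a \<in> e" "b \<in> e" "a \<noteq> b"
  shows "\<exists>y. y \<noteq> a \<and> y \<noteq> b \<and> e = {a,b,y}"
proof -
  have "card (e - {a,b}) = 1" using assms by (simp add: card_Diff_subset)
  then obtain y where y: "e - {a,b} = {y}" by (meson card_1_singletonE)
  then have "e = {a,b,y}" using assms by auto
  moreover have "y \<noteq> a" "y \<noteq> b" using y by auto
  ultimately show ?thesis by blast
qed

lemma upper_link:
  assumes unif: "uniform_hypergraph n 3 H" and free: "\<not> contains_trace H (star_V t) (star_E t)"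
    and tpos: "t > 0" and cV: "c \<in> {0..<n}"
  shows "2 * card {e\<in>H. c \<in> e} \<le> (t-1)*(t+1)"
proof -
  define V where "V = {0..<(n::nat)}"
  define adj where "adj x y \<longleftrightarrow> x \<noteq> y \<and> x \<noteq> c \<and> y \<noteq> c \<and> {c,x,y} \<in> H" for x y
  have finH: "finite H" using unif unfolding uniform_hypergraph_def
    by (meson Pow_iff finite_Pow_iff finite_atLeastLessThan finite_subset subsetI)
  have Hsub: "e \<subseteq> V" "card e = 3" "finite e" if "e \<in> H" for e
    using unif that unfolding uniform_hypergraph_def V_def by (auto intro: finite_subset)
  have viz: "(\<Sum>x\<in>V. card {y\<in>V. adj x y}) \<le> (t-1)*((t-1)+2)"
  proof (rule vizing)
    show "finite V" unfolding V_def by simp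
    show "\<forall>x y. adj x y \<longrightarrow> adj y x"
    proof (intro allI impI)
      fix x y assume a: "adj x y"
      have "{c,y,x} = {c,x,y}" by blast
      then show "adj y x" using a unfolding adj_def by auto
    qed
    show "\<forall>x. \<not> adj x x" unfolding adj_def by simp
    show "\<forall>U\<subseteq>V. (\<forall>u\<in>U. \<exists>x\<in>V - U. adj u x) \<longrightarrow> card U \<le> t - 1"
    proof (intro allI impI)
      fix U assume UV: "U \<subseteq> V" and val: "\<forall>u\<in>U. \<exists>x\<in>V - U. adj u x"
      show "card U \<le> t - 1"
      proof (rule ccontr)
        assume "\<not> card U \<le> t - 1"
        then have "t \<le> card U" by simp
        then obtain U' where U': "U' \<subseteq> U" "card U' = t" by (meson obtain_subset_with_card_n)
        have finU': "finite U'" using U' tpos card_ge_0_finite by auto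
        have cU': "c \<notin> U'" using val U' unfolding adj_def by blast
        have exU': "\<forall>u\<in>U'. \<exists>x. x \<notin> U' \<and> x \<noteq> c \<and> {c,u,x} \<in> H"
        proof
          fix u assume "u \<in> U'"
          then obtain x where "x \<in> V - U" "adj u x" using val U' by blast
          then show "\<exists>x. x \<notin> U' \<and> x \<noteq> c \<and> {c,u,x} \<in> H" using U' unfolding adj_def by blast
        qed
        have "contains_trace H (star_V t) (star_E t)"
          by (rule imp_trace[OF cU' finU' U'(2) exU'])
        then show False using free by simp
      qed
    qed
  qed
  define Ec where "Ec = {e\<in>H. c \<in> e}"
  have finEc: "finite Ec" using finH Ec_def by simp
  have cnt: "card {y\<in>V. adj x y} = card {e\<in>Ec. x \<in> e}" if xV: "x \<in> V - {c}" for x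
  proof (rule bij_betw_same_card)
    show "bij_betw (\<lambda>y. {c,x,y}) {y\<in>V. adj x y} {e\<in>Ec. x \<in> e}"
    proof (rule bij_betwI')
      fix y z assume "y \<in> {y\<in>V. adj x y}" "z \<in> {y\<in>V. adj x y}"
      then show "({c,x,y} = {c,x,z}) = (y = z)" unfolding adj_def by auto
    next
      fix y assume "y \<in> {y\<in>V. adj x y}"
      then show "{c,x,y} \<in> {e\<in>Ec. x \<in> e}" unfolding adj_def Ec_def by auto
    next
      fix e assume "e \<in> {e\<in>Ec. x \<in> e}"
      then have e: "e \<in> H" "c \<in> e" "x \<in> e" unfolding Ec_def by auto
      obtain y where y: "y \<noteq> c" "y \<noteq> x" "e = {c,x,y}" using three_elem[of e c x] Hsub[OF e(1)] e xV by auto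
      have "y \<in> V" using Hsub[OF e(1)] y by auto
      then show "\<exists>y\<in>{y\<in>V. adj x y}. e = {c,x,y}" using y e xV unfolding adj_def by auto
    qed
  qed
  have "(\<Sum>x\<in>V. card {y\<in>V. adj x y}) = (\<Sum>x\<in>V-{c}. card {y\<in>V. adj x y})"
  proof -
    have "{y\<in>V. adj c y} = {}" unfolding adj_def by auto
    then show ?thesis using cV V_def by (simp add: sum.remove)
  qed
  also have "\<dots> = (\<Sum>x\<in>V-{c}. card {e\<in>Ec. x \<in> e})" using cnt by simp
  also have "\<dots> = (\<Sum>e\<in>Ec. card ((V-{c}) \<inter> e))" using finEc V_def by (intro incidence_sum) auto
  also have "\<dots> = (\<Sum>e\<in>Ec. 2)"
  proof (intro sum.cong refl)
    fix e assume "e \<in> Ec"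
    then have "e \<in> H" "c \<in> e" unfolding Ec_def by auto
    then have "(V-{c}) \<inter> e = e - {c}" "card e = 3" "finite e" using Hsub by auto
    then show "card ((V-{c}) \<inter> e) = 2" using \<open>c \<in> e\<close> by simp
  qed
  finally have "2 * card Ec \<le> (t-1)*((t-1)+2)" using viz by simp
  moreover have "(t-1)*((t-1)+2) = (t-1)*(t+1)" using tpos by simp
  ultimately show ?thesis unfolding Ec_def by simp
qed

lemma upper:
  assumes unif: "uniform_hypergraph n 3 H" and free: "\<not> contains_trace H (star_V t) (star_E t)"
    and tpos: "t > 0"
  shows "6 * card H \<le> n * ((t-1)*(t+1))" "even t \<Longrightarrow> 6 * card H \<le> n * ((t-1)*(t+1) - 1)"
proof -
  define V where "V = {0..<(n::nat)}"
  have finH: "finite H" using unif unfolding uniform_hypergraph_def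
    by (meson Pow_iff finite_Pow_iff finite_atLeastLessThan finite_subset subsetI)
  have Hsub: "e \<subseteq> V" "card e = 3" if "e \<in> H" for e
    using unif that unfolding uniform_hypergraph_def V_def by auto
  have "(\<Sum>c\<in>V. card {e\<in>H. c \<in> e}) = (\<Sum>e\<in>H. card (V \<inter> e))"
    using finH V_def by (intro incidence_sum) auto
  also have "\<dots> = (\<Sum>e\<in>H. 3)" using Hsub by (intro sum.cong refl) (simp add: Int_absorb1)
  finally have s3: "(\<Sum>c\<in>V. card {e\<in>H. c \<in> e}) = 3 * card H" by simp
  have "6 * card H = (\<Sum>c\<in>V. 2 * card {e\<in>H. c \<in> e})" using s3 by (simp add: sum_distrib_left[symmetric])
  also have "\<dots> \<le> (\<Sum>c\<in>V. (t-1)*(t+1))"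
    using upper_link[OF unif free tpos] V_def by (intro sum_mono) auto
  finally show "6 * card H \<le> n * ((t-1)*(t+1))" using V_def by simp
  assume ev: "even t"
  have odd: "odd ((t-1)*(t+1))" using ev tpos by simp
  have "6 * card H = (\<Sum>c\<in>V. 2 * card {e\<in>H. c \<in> e})" using s3 by (simp add: sum_distrib_left[symmetric])
  also have "\<dots> \<le> (\<Sum>c\<in>V. (t-1)*(t+1) - 1)"
  proof (intro sum_mono)
    fix c assume "c \<in> V"
    then have le: "2 * card {e\<in>H. c \<in> e} \<le> (t-1)*(t+1)" using upper_link[OF unif free tpos] V_def by auto
    show "2 * card {e\<in>H. c \<in> e} \<le> (t-1)*(t+1) - 1"
    proof (rule ccontr)
      assume "\<not> ?thesis"
      then have eq: "2 * card {e\<in>H. c \<in> e} = (t-1)*(t+1)" using le by linarith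
      have "even (2 * card {e\<in>H. c \<in> e})" by simp
      then have "even ((t-1)*(t+1))" by (simp only: eq)
      with odd show False by blast
    qed
  qed
  finally show "6 * card H \<le> n * ((t-1)*(t+1) - 1)" using V_def by simp
qed

definition pt :: "nat \<Rightarrow> nat \<Rightarrow> nat \<Rightarrow> nat" where "pt q y i = i*q + y"

lemma pt_div: "y < q \<Longrightarrow> pt q y i div q = i" unfolding pt_def by simp
lemma pt_mod: "y < q \<Longrightarrow> pt q y i mod q = y" unfolding pt_def by simp
lemma pt_eq:
  assumes "y < q" "y' < q"
  shows "pt q y i = pt q y' i' \<longleftrightarrow> y = y' \<and> i = i'"
proof
  assume h: "pt q y i = pt q y' i'"
  have "y = y'" using pt_mod[OF assms(1), of i] pt_mod[OF assms(2), of i'] h by simp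
  moreover have "i = i'" using pt_div[OF assms(1), of i] pt_div[OF assms(2), of i'] h by simp
  ultimately show "y = y' \<and> i = i'" by simp
qed simp
lemma pt_lt: "y < q \<Longrightarrow> i < 3 \<Longrightarrow> pt q y i < 3*q"
proof -
  assume "y < q" "i < 3"
  then have "i*q + y < i*q + q" by simp
  also have "\<dots> = (i+1)*q" by simp
  also have "\<dots> \<le> 3*q" using \<open>i<3\<close> by (intro mult_right_mono) auto
  finally show ?thesis unfolding pt_def .
qed
lemma pt_decomp: "a < 3*q \<Longrightarrow> a = pt q (a mod q) (a div q) \<and> a mod q < q \<and> a div q < 3"
  unfolding pt_def by (auto simp: less_mult_imp_div_less)

lemma sucmod_ne: "i < 3 \<Longrightarrow> Suc i mod 3 \<noteq> i"
proof -
  assume "i < 3"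
  then have "i = 0 \<or> i = 1 \<or> i = 2" by auto
  then show ?thesis by auto
qed

definition C3 :: "nat \<Rightarrow> (nat \<Rightarrow> nat \<Rightarrow> nat) \<Rightarrow> nat set set" where
  "C3 q L = (\<lambda>(z,y,i). {pt q y i, pt q z i, pt q (L y z) (Suc i mod 3)}) ` (SIGMA z:{..<q}. {..<z} \<times> {..<3})"

lemma sum_lt2: "2 * (\<Sum>z<(q::nat). z) + q = q*q"
  by (induction q) (simp_all add: algebra_simps)

lemma card_C3: "2 * card (C3 q L) + 3*q \<le> 3*(q*q)"
proof -
  have "card (C3 q L) \<le> card (SIGMA z:{..<q}. {..<z} \<times> {..<(3::nat)})"
    unfolding C3_def by (rule card_image_le) simp
  also have "\<dots> = (\<Sum>z<q. card ({..<z} \<times> {..<(3::nat)}))" by simp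
  also have "\<dots> = (\<Sum>z<q. 3*z)" by (simp add: card_cartesian_product mult.commute)
  also have "\<dots> = 3 * (\<Sum>z<q. z)" by (simp add: sum_distrib_left)
  finally have "2 * card (C3 q L) + 3*q \<le> 3 * (2 * (\<Sum>z<q. z) + q)" by simp
  then show ?thesis using sum_lt2[of q] by simp
qed

lemma triple_ok:
  assumes "y < q" "z < q" "y \<noteq> z" "w < q" "i < 3" "3*q \<le> M"
  shows "card {pt q y i, pt q z i, pt q w (Suc i mod 3)} = 3 \<and> {pt q y i, pt q z i, pt q w (Suc i mod 3)} \<subseteq> {0..<M}"
proof -
  have s: "Suc i mod 3 < 3" by simp
  have "pt q y i \<noteq> pt q z i" using assms pt_eq by simp
  moreover have "pt q y i \<noteq> pt q w (Suc i mod 3)" using pt_eq[OF assms(1) assms(4)] sucmod_ne[OF assms(5)] by simp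
  moreover have "pt q z i \<noteq> pt q w (Suc i mod 3)" using pt_eq[OF assms(2) assms(4)] sucmod_ne[OF assms(5)] by simp
  moreover have "pt q y i < 3*q" "pt q z i < 3*q" "pt q w (Suc i mod 3) < 3*q"
    using pt_lt s assms by auto
  moreover note \<open>3*q \<le> M\<close>
  ultimately show ?thesis by auto
qed

lemma C3_mem:
  assumes "y < z" "z < q" "i < 3"
  shows "{pt q y i, pt q z i, pt q (L y z) (Suc i mod 3)} \<in> C3 q L"
  unfolding C3_def using assms by (intro image_eqI[where x="(z,y,i)"]) auto

lemma C3_pair:
  assumes "y < z" "z < q" "i < 3" "L y z < q" "3*q \<le> M"
  shows "\<exists>T\<in>C3 q L. pt q y i \<in> T \<and> pt q z i \<in> T \<and> pt q (L y z) (Suc i mod 3) \<in> T \<and> T \<subseteq> {0..<M} \<and> card T = 3"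
proof -
  let ?T = "{pt q y i, pt q z i, pt q (L y z) (Suc i mod 3)}"
  have m: "?T \<in> C3 q L" by (rule C3_mem[OF assms(1-3)])
  have c: "card ?T = 3 \<and> ?T \<subseteq> {0..<M}"
    using assms by (intro triple_ok) auto
  show ?thesis by (rule bexI[OF _ m]) (use c in simp)
qed

lemma cov_generic:
  assumes Lq: "\<forall>y z. y<q \<longrightarrow> z<q \<longrightarrow> L y z < q" and Lc: "\<forall>y z. L y z = L z y"
    and Ll: "\<forall>y x. y<q \<longrightarrow> x<q \<longrightarrow> (\<exists>z<q. L y z = x)"
    and sp: "\<forall>y i. y<q \<longrightarrow> i<3 \<longrightarrow> (\<exists>T\<in>S. pt q y i \<in> T \<and> pt q (L y y) (Suc i mod 3) \<in> T \<and> T \<subseteq> {0..<M} \<and> card T = 3)"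
    and M: "3*q \<le> M"
  shows "\<forall>a b. a < 3*q \<longrightarrow> b < 3*q \<longrightarrow> a \<noteq> b \<longrightarrow> (\<exists>T\<in>C3 q L \<union> S. a\<in>T \<and> b\<in>T \<and> T \<subseteq> {0..<M} \<and> card T = 3)"
proof -
  have same: "\<exists>T\<in>C3 q L. pt q y i \<in> T \<and> pt q z i \<in> T \<and> T \<subseteq> {0..<M} \<and> card T = 3"
    if "y < q" "z < q" "y \<noteq> z" "i < 3" for y z i
  proof (cases "y < z")
    case True
    have "L y z < q" using Lq that by blast
    then show ?thesis using C3_pair[where L=L, OF True \<open>z<q\<close> \<open>i<3\<close> _ M] by blast
  next
    case False
    then have zy: "z < y" using that by simp
    have "L z y < q" using Lq that by blast
    then show ?thesis using C3_pair[where L=L, OF zy \<open>y<q\<close> \<open>i<3\<close> _ M] by blast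
  qed
  have cross: "\<exists>T\<in>C3 q L \<union> S. pt q y i \<in> T \<and> pt q x (Suc i mod 3) \<in> T \<and> T \<subseteq> {0..<M} \<and> card T = 3"
    if yx: "y < q" "x < q" "i < 3" for y x i
  proof -
    obtain z where z: "z < q" "L y z = x" using Ll yx by blast
    show ?thesis
    proof (cases "z = y")
      case True
      then have "\<exists>T\<in>S. pt q y i \<in> T \<and> pt q (L y y) (Suc i mod 3) \<in> T \<and> T \<subseteq> {0..<M} \<and> card T = 3"
        using sp yx by blast
      then show ?thesis using z True by auto
    next
      case False
      show ?thesis
      proof (cases "y < z")
        case True
        have "L y z < q" using Lq yx z by blast
        from C3_pair[where L=L, OF True \<open>z<q\<close> \<open>i<3\<close> this M] show ?thesis using z by auto
      next
        case False
        then have zy: "z < y" using \<open>z \<noteq> y\<close> by simp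
        have "L z y < q" using Lq yx z by blast
        have "L z y = L y z" using Lc by blast
        then have "L z y = x" using z by simp
        with C3_pair[where L=L, OF zy \<open>y<q\<close> \<open>i<3\<close> \<open>L z y < q\<close> M] show ?thesis by auto
      qed
    qed
  qed
  show ?thesis
  proof (intro allI impI)
    fix a b assume ab: "a < 3*q" "b < 3*q" "a \<noteq> b"
    define ya where "ya = a mod q"
    define ia where "ia = a div q"
    define yb where "yb = b mod q"
    define ib where "ib = b div q"
    have a: "a = pt q ya ia" "ya < q" "ia < 3" using pt_decomp[OF ab(1)] ya_def ia_def by auto
    have b: "b = pt q yb ib" "yb < q" "ib < 3" using pt_decomp[OF ab(2)] yb_def ib_def by auto
    have "ia \<in> {0,1,2}" "ib \<in> {0,1,2}" using a(3) b(3) by auto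
    then have "ia = ib \<or> ib = Suc ia mod 3 \<or> ia = Suc ib mod 3" by auto
    then show "\<exists>T\<in>C3 q L \<union> S. a\<in>T \<and> b\<in>T \<and> T \<subseteq> {0..<M} \<and> card T = 3"
    proof (elim disjE)
      assume "ia = ib"
      then have "ya \<noteq> yb" using a b ab by auto
      from same[OF a(2) b(2) this a(3)] obtain T where
        T: "T \<in> C3 q L" "pt q ya ia \<in> T" "pt q yb ia \<in> T" "T \<subseteq> {0..<M}" "card T = 3" by blast
      show ?thesis
        by (rule bexI[of _ T]) (use T a b \<open>ia = ib\<close> in auto)
    next
      assume "ib = Suc ia mod 3"
      then show ?thesis using cross[OF a(2) b(2) a(3)] a b by simp
    next
      assume "ia = Suc ib mod 3"
      from cross[OF b(2) a(2) b(3)] obtain T where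
        T: "T \<in> C3 q L \<union> S" "pt q yb ib \<in> T" "pt q ya (Suc ib mod 3) \<in> T" "T \<subseteq> {0..<M}" "card T = 3" by blast
      show ?thesis
        by (rule bexI[of _ T]) (use T a b \<open>ia = Suc ib mod 3\<close> in auto)
    qed
  qed
qed

definition sh :: "nat \<Rightarrow> nat \<Rightarrow> nat set \<Rightarrow> nat set" where
  "sh m j T = (\<lambda>x. x + j*m) ` T"

lemma sh_mem:
  assumes "T \<subseteq> {0..<m}" "x \<in> sh m j T"
  shows "x div m = j" "x \<in> {j*m..<j*m+m}" "x - j*m \<in> T"
  using assms unfolding sh_def by auto

lemma sh_inj: "sh m j T = sh m j T' \<Longrightarrow> T = T'"
  unfolding sh_def by (simp add: inj_image_eq_iff inj_def)

lemma lower: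
  assumes m: "m = t + 2" and dvd: "m dvd n" and tpos: "t > 0"
    and cov: "\<forall>a b. a < m \<longrightarrow> b < m \<longrightarrow> a \<noteq> b \<longrightarrow>
        (\<exists>T\<in>R. a \<in> T \<and> b \<in> T \<and> T \<subseteq> {0..<m} \<and> card T = 3)"
    and finR: "finite R"
  shows "\<exists>H. uniform_hypergraph n 3 H \<and> \<not> contains_trace H (star_V t) (star_E t)
            \<and> (n div m) * ((m choose 3) - card R) \<le> card H"
proof -
  define T3 where "T3 = {T. T \<subseteq> {0..<m} \<and> card T = 3}"
  define B0 where "B0 = T3 - R"
  define H where "H = (\<Union>j\<in>{0..<n div m}. sh m j ` B0)"
  have mpos: "m > 0" using m by simp
  have B0sub: "T \<subseteq> {0..<m}" "card T = 3" "T \<notin> R" if "T \<in> B0" for T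
    using that unfolding B0_def T3_def by auto
  have finT3: "finite T3" unfolding T3_def by simp
  have finB0: "finite B0" unfolding B0_def using finT3 by simp
  have Hmem: "S \<in> H \<longleftrightarrow> (\<exists>j<n div m. \<exists>T\<in>B0. S = sh m j T)" for S
    unfolding H_def by auto
  have unif: "uniform_hypergraph n 3 H"
    unfolding uniform_hypergraph_def
  proof
    fix S assume "S \<in> H"
    then obtain j T where j: "j < n div m" and T: "T \<in> B0" and S: "S = sh m j T" using Hmem by blast
    have "S \<subseteq> {0..<n}"
    proof
      fix x assume "x \<in> S"
      then have "x < j*m + m" using sh_mem(2)[OF B0sub(1)[OF T]] S by auto
      also have "\<dots> = (j+1)*m" by simp
      also have "\<dots> \<le> (n div m) * m" using j by (intro mult_right_mono) auto
      also have "\<dots> = n" using dvd by simp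
      finally show "x \<in> {0..<n}" by simp
    qed
    moreover have "card S = 3" using S B0sub(2)[OF T] unfolding sh_def
      by (simp add: card_image)
    ultimately show "S \<subseteq> {0..<n} \<and> card S = 3" by simp
  qed
  have cardH: "card H = (n div m) * card B0"
  proof -
    have "card H = (\<Sum>j\<in>{0..<n div m}. card (sh m j ` B0))"
      unfolding H_def
    proof (rule card_UN_disjoint)
      show "finite {0..<n div m}" by simp
      show "\<forall>j\<in>{0..<n div m}. finite (sh m j ` B0)" using finB0 by simp
      show "\<forall>(i::nat)\<in>{0..<n div m}. \<forall>(j::nat)\<in>{0..<n div m}. i \<noteq> j \<longrightarrow> sh m i ` B0 \<inter> sh m j ` B0 = {}"
      proof (intro ballI impI)
        fix i j :: nat assume "i \<noteq> j"
        show "sh m i ` B0 \<inter> sh m j ` B0 = {}"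
        proof (rule ccontr)
          assume "sh m i ` B0 \<inter> sh m j ` B0 \<noteq> {}"
          then obtain T T' where T: "T \<in> B0" "T' \<in> B0" and eq: "sh m i T = sh m j T'" by auto
          have "T \<noteq> {}" using B0sub(2)[OF T(1)] by auto
          then obtain y where "y \<in> T" by auto
          then have "y + i*m \<in> sh m i T" unfolding sh_def by auto
          then have "(y + i*m) div m = i" "(y + i*m) div m = j"
            using sh_mem(1) B0sub(1) T eq by metis+
          then show False using \<open>i \<noteq> j\<close> by simp
        qed
      qed
    qed
    also have "\<dots> = (\<Sum>j\<in>{0..<n div m}. card B0)"
      by (intro sum.cong refl card_image inj_onI) (auto dest: sh_inj)
    finally show ?thesis by simp
  qed
  have cardB0: "(m choose 3) - card R \<le> card B0"
  proof -
    have "card T3 = m choose 3" unfolding T3_def using n_subsets[of "{0..<m}" 3] by simp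
    moreover have "card B0 = card T3 - card (T3 \<inter> R)" unfolding B0_def
      using finT3 by (metis Diff_Int2 card_Diff_subset_Int finite_Int inf_le1 Int_commute Diff_Int Int_absorb)
    moreover have "card (T3 \<inter> R) \<le> card R" using finR by (simp add: card_mono)
    ultimately show ?thesis by simp
  qed
  have free: "\<not> contains_trace H (star_V t) (star_E t)"
  proof
    assume ct: "contains_trace H (star_V t) (star_E t)"
    have "\<exists>c U. c \<notin> U \<and> finite U \<and> card U = t \<and> (\<forall>u\<in>U. \<exists>x. x \<notin> U \<and> x \<noteq> c \<and> {c,u,x} \<in> H)"
      by (rule trace_imp[OF unif ct])
    then obtain c U where cU: "c \<notin> U" and finU: "finite U" and cardU: "card U = t"
      and ex: "\<forall>u\<in>U. \<exists>x. x \<notin> U \<and> x \<noteq> c \<and> {c,u,x} \<in> H"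
      by blast
    define j where "j = c div m"
    define Blk where "Blk = {j*m..<j*m+m}"
    have inblk: "S \<subseteq> Blk" if "S \<in> H" "c \<in> S" for S
    proof -
      from that(1)[unfolded Hmem] obtain j' T where T: "T \<in> B0" and S: "S = sh m j' T" by blast
      have "c \<in> sh m j' T" using that(2) S by simp
      then have "c div m = j'" by (rule sh_mem(1)[OF B0sub(1)[OF T]])
      then have "j' = j" by (simp add: j_def)
      then show ?thesis using sh_mem(2)[OF B0sub(1)[OF T]] S Blk_def by blast
    qed
    have cB: "c \<in> Blk"
    proof -
      have "c = j*m + c mod m" unfolding j_def by simp
      moreover have "c mod m < m" using mpos by simp
      ultimately have "j*m \<le> c" "c < j*m+m" by linarith+
      then show ?thesis unfolding Blk_def by simp
    qed
    have UB: "U \<subseteq> Blk - {c}" using ex inblk cU by fastforce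
    have cardBlk: "card (Blk - {c}) = t + 1" using cB Blk_def m by simp
    have "card (Blk - {c} - U) = card (Blk - {c}) - card U"
      by (rule card_Diff_subset[OF finU UB])
    then have "card (Blk - {c} - U) = 1" using cardBlk cardU by simp
    then obtain y where y: "Blk - {c} - U = {y}" by (rule card_1_singletonE)
    have xy: "{c,u,y} \<in> H" if "u \<in> U" for u
    proof -
      from bspec[OF ex that] obtain x where x: "x \<notin> U" "x \<noteq> c" "{c,u,x} \<in> H" by blast
      have "x \<in> Blk" using inblk[OF x(3)] by auto
      then have "x = y" using x y by blast
      then show ?thesis using x by simp
    qed
    have yB: "y \<in> Blk" "y \<noteq> c" "y \<notin> U" using y by auto
    define c' where "c' = c - j*m"
    define y' where "y' = y - j*m"
    have c'lt: "c' < m" "y' < m" "c' \<noteq> y'" using cB yB Blk_def c'_def y'_def by auto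
    then obtain T where T: "T \<in> R" "c' \<in> T" "y' \<in> T" "T \<subseteq> {0..<m}" "card T = 3"
      using cov by blast
    obtain z' where z': "z' \<noteq> c'" "z' \<noteq> y'" "T = {c',y',z'}"
      using three_elem[of T c' y'] T c'lt by (metis card.infinite zero_neq_numeral)
    define z where "z = z' + j*m"
    have z'm: "z' < m" using T z' by auto
    have zB: "z \<in> Blk" "z \<noteq> c" "z \<noteq> y" using z'm z' c'_def y'_def cB yB Blk_def z_def by auto
    then have zU: "z \<in> U" using y by blast
    have shT: "sh m j T = {c, z, y}"
      using z' z_def c'_def y'_def cB yB Blk_def unfolding sh_def by auto
    have "{c,z,y} \<in> H" using xy[OF zU] by (simp add: insert_commute)
    then obtain j' T' where T': "T' \<in> B0" and S: "{c,z,y} = sh m j' T'" unfolding Hmem by blast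
    have "j' = j" using sh_mem(1)[OF B0sub(1)[OF T']] S j_def by (metis insertI1)
    then have "T' = T" using S shT sh_inj by metis
    then show False using B0sub(3)[OF T'] T(1) by simp
  qed
  show ?thesis using unif free cardH cardB0 by auto
qed

definition covers :: "nat \<Rightarrow> nat set set \<Rightarrow> bool" where
  "covers m R \<longleftrightarrow> (\<forall>a b. a<m \<longrightarrow> b<m \<longrightarrow> a\<noteq>b \<longrightarrow> (\<exists>T\<in>R. a\<in>T \<and> b\<in>T \<and> T \<subseteq> {0..<m} \<and> card T = 3))"

definition cols :: "nat \<Rightarrow> nat \<Rightarrow> nat set set" where
  "cols q k = (\<lambda>x. {pt q x 0, pt q x 1, pt q x 2}) ` {..<k}"

lemma cols_ok:
  assumes "x < k" "k \<le> q" "3*q \<le> M"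
  shows "{pt q x 0, pt q x 1, pt q x 2} \<in> cols q k \<and> card {pt q x 0, pt q x 1, pt q x 2} = 3
         \<and> {pt q x 0, pt q x 1, pt q x 2} \<subseteq> {0..<M}"
proof -
  have xq: "x < q" using assms by simp
  have "pt q x 0 \<noteq> pt q x 1" "pt q x 0 \<noteq> pt q x 2" "pt q x 1 \<noteq> pt q x 2"
    using pt_eq[OF xq xq] by auto
  moreover have "pt q x 0 < 3*q" "pt q x 1 < 3*q" "pt q x 2 < 3*q" using pt_lt xq by auto
  moreover have "{pt q x 0, pt q x 1, pt q x 2} \<in> cols q k" unfolding cols_def using assms by auto
  ultimately show ?thesis using assms by auto
qed

lemma col_pair:
  assumes "x < k" "k \<le> q" "3*q \<le> M" "i < 3" "j < 3"
  shows "\<exists>T\<in>cols q k. pt q x i \<in> T \<and> pt q x j \<in> T \<and> T \<subseteq> {0..<M} \<and> card T = 3"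
proof -
  have "i \<in> {0,1,2}" "j \<in> {0,1,2}" using assms by auto
  then have "pt q x i \<in> {pt q x 0, pt q x 1, pt q x 2}" "pt q x j \<in> {pt q x 0, pt q x 1, pt q x 2}" by auto
  moreover note c = cols_ok[OF assms(1-3)]
  ultimately show ?thesis by (intro bexI[of _ "{pt q x 0, pt q x 1, pt q x 2}"]) simp_all
qed

lemma card_cols: "card (cols q k) \<le> k"
  unfolding cols_def by (rule order.trans[OF card_image_le]) simp_all

lemma bose:
  assumes odd: "odd q"
  shows "\<exists>R. finite R \<and> covers (3*q) R \<and> 6 * card R \<le> (3*q)*(3*q-1)"
proof -
  define h where "h = (q+1) div 2"
  have h2: "2*h = q+1" using odd h_def by simp
  have qpos: "q > 0" using odd by (cases q) auto
  define L where "L y z = ((y+z)*h) mod q" for y z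
  have Lq: "\<forall>y z. y<q \<longrightarrow> z<q \<longrightarrow> L y z < q" using qpos L_def by simp
  have Lc: "\<forall>y z. L y z = L z y" unfolding L_def by (simp add: add.commute)
  have Lx: "(x*(2*h)) mod q = x" if "x < q" for x
  proof -
    have "x*(2*h) = x + x*q" using h2 by (simp add: algebra_simps)
    then show ?thesis using that by simp
  qed
  have Ll: "\<forall>y x. y<q \<longrightarrow> x<q \<longrightarrow> (\<exists>z<q. L y z = x)"
  proof (intro allI impI)
    fix y x assume yx: "y < q" "x < q"
    define z where "z = (2*x + q - y) mod q"
    have "(y + z) mod q = (y + (2*x + q - y)) mod q" unfolding z_def by (simp add: mod_add_right_eq)
    also have "y + (2*x + q - y) = 2*x + q" using yx by simp
    finally have yz: "(y + z) mod q = (2*x) mod q" by simp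
    have "L y z = (((y+z) mod q)*h) mod q" unfolding L_def by (simp add: mod_mult_left_eq)
    also have "\<dots> = ((2*x)*h) mod q" using yz by (simp add: mod_mult_left_eq)
    also have "\<dots> = x" using Lx[OF yx(2)] by (simp add: mult.assoc mult.left_commute)
    finally have "L y z = x" .
    moreover have "z < q" using qpos z_def by simp
    ultimately show "\<exists>z<q. L y z = x" by blast
  qed
  have Lyy: "L y y = y" if "y < q" for y
  proof -
    have e: "(y+y)*h = y*(2*h)" by (simp add: algebra_simps)
    show ?thesis unfolding L_def e by (rule Lx[OF that])
  qed
  have sp: "\<forall>y i. y<q \<longrightarrow> i<3 \<longrightarrow> (\<exists>T\<in>cols q q. pt q y i \<in> T \<and> pt q (L y y) (Suc i mod 3) \<in> T \<and> T \<subseteq> {0..<3*q} \<and> card T = 3)"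
  proof (intro allI impI)
    fix y i :: nat assume "y < q" "i < 3"
    then show "\<exists>T\<in>cols q q. pt q y i \<in> T \<and> pt q (L y y) (Suc i mod 3) \<in> T \<and> T \<subseteq> {0..<3*q} \<and> card T = 3"
      using col_pair[of y q q "3*q" i "Suc i mod 3"] Lyy by simp
  qed
  define R where "R = C3 q L \<union> cols q q"
  have "covers (3*q) R"
    unfolding covers_def R_def by (rule cov_generic[OF Lq Lc Ll sp order.refl])
  moreover have "finite R" unfolding R_def C3_def cols_def by simp
  moreover have "6 * card R \<le> (3*q)*(3*q-1)"
  proof -
    have "card R \<le> card (C3 q L) + card (cols q q)" unfolding R_def by (rule card_Un_le)
    then have "6 * card R \<le> 6 * card (C3 q L) + 6 * q" using card_cols[of q q] by linarith
    also have "\<dots> \<le> 9*(q*q) - 3*q" using card_C3[of q L] by linarith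
    also have "\<dots> = (3*q)*(3*q-1)" by (simp add: diff_mult_distrib2)
    finally show ?thesis .
  qed
  ultimately show ?thesis by blast
qed

lemma tri3: "(a::nat) \<noteq> b \<Longrightarrow> a \<noteq> c \<Longrightarrow> b \<noteq> c \<Longrightarrow> a < M \<Longrightarrow> b < M \<Longrightarrow> c < M \<Longrightarrow>
  card {a,b,c} = 3 \<and> {a,b,c} \<subseteq> {0..<M}"
  by auto

definition hL :: "nat \<Rightarrow> nat \<Rightarrow> nat" where "hL k w = w div 2 + k * (w mod 2)"
definition LL :: "nat \<Rightarrow> nat \<Rightarrow> nat \<Rightarrow> nat" where "LL k y z = hL k ((y+z) mod (2*k))"

lemma hL_lt: assumes "w < 2*k" shows "hL k w < 2*k"
proof (cases "w mod 2 = 0")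
  case True
  then show ?thesis using assms unfolding hL_def by simp
next
  case False
  then have "w mod 2 = 1" by simp
  moreover have "w = 2*(w div 2) + w mod 2" by simp
  ultimately have "w div 2 < k" using assms by linarith
  then show ?thesis using \<open>w mod 2 = 1\<close> unfolding hL_def by simp
qed

lemma LL_props:
  assumes k: "k \<ge> 1"
  shows "\<forall>y z. y<2*k \<longrightarrow> z<2*k \<longrightarrow> LL k y z < 2*k"
    "\<forall>y z. LL k y z = LL k z y"
    "\<forall>y x. y<2*k \<longrightarrow> x<2*k \<longrightarrow> (\<exists>z<2*k. LL k y z = x)"
    "\<And>y. y < 2*k \<Longrightarrow> LL k y y = (if y < k then y else y - k)"
proof -
  show "\<forall>y z. y<2*k \<longrightarrow> z<2*k \<longrightarrow> LL k y z < 2*k"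
    using k unfolding LL_def by (auto intro: hL_lt)
  show "\<forall>y z. LL k y z = LL k z y" unfolding LL_def by (simp add: add.commute)
  show "\<forall>y x. y<2*k \<longrightarrow> x<2*k \<longrightarrow> (\<exists>z<2*k. LL k y z = x)"
  proof (intro allI impI)
    fix y x assume yx: "y < 2*k" "x < 2*k"
    define w where "w = (if x < k then 2*x else 2*(x-k)+1)"
    have w: "w < 2*k" "hL k w = x" using yx unfolding w_def hL_def by auto
    define z where "z = (w + 2*k - y) mod (2*k)"
    have "(y + z) mod (2*k) = (y + (w + 2*k - y)) mod (2*k)" unfolding z_def by (simp add: mod_add_right_eq)
    also have "y + (w + 2*k - y) = w + 2*k" using yx by simp
    finally have "(y + z) mod (2*k) = w" using w by simp
    then have "LL k y z = x" unfolding LL_def using w by simp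
    moreover have "z < 2*k" unfolding z_def using k by simp
    ultimately show "\<exists>z<2*k. LL k y z = x" by blast
  qed
  fix y assume y: "y < 2*k"
  show "LL k y y = (if y < k then y else y - k)"
  proof (cases "y < k")
    case True
    then have "(y+y) mod (2*k) = 2*y" by simp
    then show ?thesis unfolding LL_def hL_def using True by simp
  next
    case False
    then have "(y+y) mod (2*k) = 2*(y-k)" using y by (simp add: le_mod_geq)
    then show ?thesis unfolding LL_def hL_def using False by simp
  qed
qed

lemma card_prod3: "card (f ` ({..<k} \<times> {..<(3::nat)})) \<le> 3*k"
  by (rule order.trans[OF card_image_le]) (simp_all add: card_cartesian_product)

lemma cover0:
  assumes k: "k \<ge> 1"
  shows "\<exists>R. finite R \<and> covers (6*k) R \<and> 6 * card R \<le> (6*k)*(6*k)"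
proof -
  define q where "q = 2*k"
  define L where "L = LL k"
  define S where "S = (\<lambda>(x,i). {pt q x i, pt q x (Suc i mod 3), pt q (x+k) i}) ` ({..<k} \<times> {..<3})"
  have Lq: "\<forall>y z. y<q \<longrightarrow> z<q \<longrightarrow> L y z < q" and Lc: "\<forall>y z. L y z = L z y"
    and Ll: "\<forall>y x. y<q \<longrightarrow> x<q \<longrightarrow> (\<exists>z<q. L y z = x)"
    and Lyy: "\<And>y. y < q \<Longrightarrow> L y y = (if y < k then y else y - k)"
    using LL_props[OF k] unfolding q_def L_def by auto
  have Sok: "{pt q x i, pt q x (Suc i mod 3), pt q (x+k) i} \<in> S \<and>
     card {pt q x i, pt q x (Suc i mod 3), pt q (x+k) i} = 3 \<and> {pt q x i, pt q x (Suc i mod 3), pt q (x+k) i} \<subseteq> {0..<3*q}"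
    if xi: "x < k" "i < 3" for x i
  proof -
    have xq: "x < q" "x + k < q" "Suc i mod 3 < 3" using xi q_def by auto
    have "pt q x i \<noteq> pt q x (Suc i mod 3)" using pt_eq[OF xq(1) xq(1)] sucmod_ne[OF xi(2)] by simp
    moreover have "pt q x i \<noteq> pt q (x+k) i" using pt_eq[OF xq(1) xq(2)] k by simp
    moreover have "pt q x (Suc i mod 3) \<noteq> pt q (x+k) i" using pt_eq[OF xq(1) xq(2)] sucmod_ne[OF xi(2)] by simp
    moreover have "pt q x i < 3*q" "pt q x (Suc i mod 3) < 3*q" "pt q (x+k) i < 3*q"
      using pt_lt xq xi by auto
    ultimately have c: "card {pt q x i, pt q x (Suc i mod 3), pt q (x+k) i} = 3 \<and> {pt q x i, pt q x (Suc i mod 3), pt q (x+k) i} \<subseteq> {0..<3*q}"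
      by (intro tri3)
    have "{pt q x i, pt q x (Suc i mod 3), pt q (x+k) i} \<in> S"
      unfolding S_def using xi by (intro image_eqI[where x="(x,i)"]) auto
    then show ?thesis using c by simp
  qed
  have sp: "\<forall>y i. y<q \<longrightarrow> i<3 \<longrightarrow> (\<exists>T\<in>S. pt q y i \<in> T \<and> pt q (L y y) (Suc i mod 3) \<in> T \<and> T \<subseteq> {0..<3*q} \<and> card T = 3)"
  proof (intro allI impI)
    fix y i :: nat assume yi: "y < q" "i < 3"
    show "\<exists>T\<in>S. pt q y i \<in> T \<and> pt q (L y y) (Suc i mod 3) \<in> T \<and> T \<subseteq> {0..<3*q} \<and> card T = 3"
    proof (cases "y < k")
      case True
      note c = Sok[OF True yi(2)]
      have "L y y = y" using Lyy[OF yi(1)] True by simp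
      then show ?thesis using c by (intro bexI[of _ "{pt q y i, pt q y (Suc i mod 3), pt q (y+k) i}"]) simp_all
    next
      case False
      then have x: "y - k < k" using yi q_def by simp
      note c = Sok[OF x yi(2)]
      have "L y y = y - k" using Lyy[OF yi(1)] False by simp
      moreover have "y - k + k = y" using False by simp
      ultimately show ?thesis using c by (intro bexI[of _ "{pt q (y-k) i, pt q (y-k) (Suc i mod 3), pt q (y-k+k) i}"]) simp_all
    qed
  qed
  define R where "R = C3 q L \<union> S"
  have "covers (3*q) R"
    unfolding covers_def R_def by (rule cov_generic[OF Lq Lc Ll sp order.refl])
  then have "covers (6*k) R" using q_def by simp
  moreover have "finite R" unfolding R_def C3_def S_def by simp
  moreover have "6 * card R \<le> (6*k)*(6*k)"
  proof -
    have "card R \<le> card (C3 q L) + card S" unfolding R_def by (rule card_Un_le)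
    moreover have "card S \<le> 3*k" unfolding S_def by (rule card_prod3)
    moreover have "2 * card (C3 q L) + 3*q \<le> 3*(q*q)" by (rule card_C3)
    ultimately show ?thesis unfolding q_def by linarith
  qed
  ultimately show ?thesis by blast
qed

lemma skolem:
  assumes k: "k \<ge> 1"
  shows "\<exists>R. finite R \<and> covers (6*k+1) R \<and> 6 * card R \<le> (6*k+1)*(6*k)"
proof -
  define q where "q = 2*k"
  define L where "L = LL k"
  define Inf where "Inf = (\<lambda>(x,i). {3*q, pt q (x+k) i, pt q x (Suc i mod 3)}) ` ({..<k} \<times> {..<3})"
  have Lq: "\<forall>y z. y<q \<longrightarrow> z<q \<longrightarrow> L y z < q" and Lc: "\<forall>y z. L y z = L z y"
    and Ll: "\<forall>y x. y<q \<longrightarrow> x<q \<longrightarrow> (\<exists>z<q. L y z = x)"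
    and Lyy: "\<And>y. y < q \<Longrightarrow> L y y = (if y < k then y else y - k)"
    using LL_props[OF k] unfolding q_def L_def by auto
  have Infok: "{3*q, pt q (x+k) i, pt q x (Suc i mod 3)} \<in> Inf \<and>
     card {3*q, pt q (x+k) i, pt q x (Suc i mod 3)} = 3 \<and> {3*q, pt q (x+k) i, pt q x (Suc i mod 3)} \<subseteq> {0..<3*q+1}"
    if xi: "x < k" "i < 3" for x i
  proof -
    have xq: "x < q" "x + k < q" "Suc i mod 3 < 3" using xi q_def by auto
    have l: "pt q (x+k) i < 3*q" "pt q x (Suc i mod 3) < 3*q" using pt_lt xq xi by auto
    then have "3*q \<noteq> pt q (x+k) i" "3*q \<noteq> pt q x (Suc i mod 3)" by auto
    moreover have "pt q (x+k) i \<noteq> pt q x (Suc i mod 3)" using pt_eq[OF xq(2) xq(1)] sucmod_ne[OF xi(2)] by simp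
    moreover have "3*q < 3*q+1" by simp
    ultimately have c: "card {3*q, pt q (x+k) i, pt q x (Suc i mod 3)} = 3 \<and> {3*q, pt q (x+k) i, pt q x (Suc i mod 3)} \<subseteq> {0..<3*q+1}"
      using l by (intro tri3) auto
    have "{3*q, pt q (x+k) i, pt q x (Suc i mod 3)} \<in> Inf"
      unfolding Inf_def using xi by (intro image_eqI[where x="(x,i)"]) auto
    then show ?thesis using c by simp
  qed
  define S where "S = cols q k \<union> Inf"
  have sp: "\<forall>y i. y<q \<longrightarrow> i<3 \<longrightarrow> (\<exists>T\<in>S. pt q y i \<in> T \<and> pt q (L y y) (Suc i mod 3) \<in> T \<and> T \<subseteq> {0..<3*q+1} \<and> card T = 3)"
  proof (intro allI impI)
    fix y i :: nat assume yi: "y < q" "i < 3"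
    show "\<exists>T\<in>S. pt q y i \<in> T \<and> pt q (L y y) (Suc i mod 3) \<in> T \<and> T \<subseteq> {0..<3*q+1} \<and> card T = 3"
    proof (cases "y < k")
      case True
      have kq: "k \<le> q" using q_def by simp
      obtain T where T: "T \<in> cols q k" "pt q y i \<in> T" "pt q y (Suc i mod 3) \<in> T" "T \<subseteq> {0..<3*q+1}" "card T = 3"
        using col_pair[OF True kq _ yi(2), of "3*q+1" "Suc i mod 3"] by auto
      have "L y y = y" using Lyy[OF yi(1)] True by simp
      then show ?thesis using T unfolding S_def by (intro bexI[of _ T]) simp_all
    next
      case False
      then have x: "y - k < k" using yi q_def by simp
      note c = Infok[OF x yi(2)]
      have "L y y = y - k" using Lyy[OF yi(1)] False by simp
      moreover have "y - k + k = y" using False by simp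
      ultimately show ?thesis using c unfolding S_def
        by (intro bexI[of _ "{3*q, pt q (y-k+k) i, pt q (y-k) (Suc i mod 3)}"]) simp_all
    qed
  qed
  define R where "R = C3 q L \<union> S"
  have gen: "\<forall>a b. a < 3*q \<longrightarrow> b < 3*q \<longrightarrow> a \<noteq> b \<longrightarrow> (\<exists>T\<in>R. a\<in>T \<and> b\<in>T \<and> T \<subseteq> {0..<3*q+1} \<and> card T = 3)"
    unfolding R_def by (rule cov_generic[OF Lq Lc Ll sp]) simp
  have infp: "\<exists>T\<in>R. 3*q \<in> T \<and> c \<in> T \<and> T \<subseteq> {0..<3*q+1} \<and> card T = 3" if c: "c < 3*q" for c
  proof -
    define yc where "yc = c mod q"
    define ic where "ic = c div q"
    have cd: "c = pt q yc ic" "yc < q" "ic < 3" using pt_decomp[OF c] yc_def ic_def by auto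
    show ?thesis
    proof (cases "yc < k")
      case False
      then have x: "yc - k < k" using cd q_def by simp
      note t = Infok[OF x cd(3)]
      have "yc - k + k = yc" using False by simp
      then show ?thesis using t cd(1) unfolding R_def S_def
        by (intro bexI[of _ "{3*q, pt q (yc-k+k) ic, pt q (yc-k) (Suc ic mod 3)}"]) simp_all
    next
      case True
      have j: "(ic + 2) mod 3 < 3" by simp
      note t = Infok[OF True j]
      have "ic \<in> {0,1,2}" using cd by auto
      then have "Suc ((ic + 2) mod 3) mod 3 = ic" by auto
      then show ?thesis using t cd(1) unfolding R_def S_def
        by (intro bexI[of _ "{3*q, pt q (yc+k) ((ic + 2) mod 3), pt q yc (Suc ((ic + 2) mod 3) mod 3)}"]) simp_all
    qed
  qed
  have "covers (3*q+1) R"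
    unfolding covers_def
  proof (intro allI impI)
    fix a b assume ab: "a < 3*q+1" "b < 3*q+1" "a \<noteq> b"
    show "\<exists>T\<in>R. a\<in>T \<and> b\<in>T \<and> T \<subseteq> {0..<3*q+1} \<and> card T = 3"
    proof (cases "a < 3*q \<and> b < 3*q")
      case True
      then show ?thesis using gen ab by blast
    next
      case False
      then have "a = 3*q \<and> b < 3*q \<or> b = 3*q \<and> a < 3*q" using ab by auto
      then show ?thesis
      proof
        assume h: "a = 3*q \<and> b < 3*q"
        obtain T where "T \<in> R" "3*q \<in> T" "b \<in> T" "T \<subseteq> {0..<3*q+1}" "card T = 3"
          using infp[of b] h by auto
        then show ?thesis using h by (intro bexI[of _ T]) simp_all
      next
        assume h: "b = 3*q \<and> a < 3*q"
        obtain T where "T \<in> R" "3*q \<in> T" "a \<in> T" "T \<subseteq> {0..<3*q+1}" "card T = 3"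
          using infp[of a] h by auto
        then show ?thesis using h by (intro bexI[of _ T]) simp_all
      qed
    qed
  qed
  then have "covers (6*k+1) R" using q_def by simp
  moreover have "finite R" unfolding R_def C3_def S_def cols_def Inf_def by simp
  moreover have "6 * card R \<le> (6*k+1)*(6*k)"
  proof -
    have "card R \<le> card (C3 q L) + card S" unfolding R_def by (rule card_Un_le)
    moreover have "card S \<le> card (cols q k) + card Inf" unfolding S_def by (rule card_Un_le)
    moreover have "card (cols q k) \<le> k" by (rule card_cols)
    moreover have "card Inf \<le> 3*k" unfolding Inf_def by (rule card_prod3)
    moreover have "2 * card (C3 q L) + 3*q \<le> 3*(q*q)" by (rule card_C3)
    moreover have "q*q = 4*(k*k)" "(6*k+1)*(6*k) = 36*(k*k) + 6*k" unfolding q_def by (simp_all add: algebra_simps)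
    ultimately show ?thesis unfolding q_def by linarith
  qed
  ultimately show ?thesis by blast
qed

lemma choose2: "2 * ((t+1) choose 2) = (t+1)*t"
  by (simp add: choose_two)

lemma choose3: "6 * ((t+2) choose 3) = (t+2)*(t+1)*t"
proof (induction t)
  case 0
  then show ?case by (simp add: numeral_3_eq_3)
next
  case (Suc t)
  have "Suc t + 2 choose 3 = ((t+2) choose 2) + ((t+2) choose 3)"
    by (simp add: numeral_3_eq_3 numeral_2_eq_2)
  moreover have "2 * ((t+2) choose 2) = (t+2)*(t+1)" using choose2[of "t+1"] by simp
  ultimately show ?case using Suc by (simp add: algebra_simps)
qed

lemma final_arith:
  fixes C cR m X B d n :: nat
  assumes "6*C = m*X + B" "6*cR \<le> B" "n = d*m"
  shows "n*X \<le> 6*(d*(C - cR))"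
proof -
  have "6*(C - cR) = 6*C - 6*cR" by (simp add: diff_mult_distrib2)
  then have "m*X \<le> 6*(C - cR)" using assms(1,2) by linarith
  then have "d*(m*X) \<le> d*(6*(C - cR))" by (rule mult_left_mono) simp
  then show ?thesis using assms(3) by (simp add: algebra_simps)
qed

lemma ex_eq:
  fixes n t X :: nat
  assumes up: "\<And>H. uniform_hypergraph n 3 H \<Longrightarrow> \<not> contains_trace H (star_V t) (star_E t) \<Longrightarrow> 6 * card H \<le> n*X"
    and low: "\<exists>H. uniform_hypergraph n 3 H \<and> \<not> contains_trace H (star_V t) (star_E t) \<and> n*X \<le> 6 * card H"
  shows "6 * ex_trace 3 n (star_V t) (star_E t) = n*X"
proof -
  define S where "S = {card H | H. uniform_hypergraph n 3 H \<and> \<not> contains_trace H (star_V t) (star_E t)}"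
  obtain H0 where H0: "uniform_hypergraph n 3 H0" "\<not> contains_trace H0 (star_V t) (star_E t)" "n*X \<le> 6 * card H0"
    using low by blast
  have e0: "6 * card H0 = n*X" using up[OF H0(1,2)] H0(3) by simp
  have "S \<subseteq> card ` Pow (Pow {0..<n})"
    unfolding S_def uniform_hypergraph_def by auto
  then have finS: "finite S" by (rule finite_subset) simp
  have "Max S = card H0"
  proof (rule Max_eqI[OF finS])
    fix s assume "s \<in> S"
    then obtain H where "s = card H" "uniform_hypergraph n 3 H" "\<not> contains_trace H (star_V t) (star_E t)"
      unfolding S_def by blast
    then have "6 * s \<le> 6 * card H0" using up e0 by simp
    then show "s \<le> card H0" by simp
  next
    show "card H0 \<in> S" unfolding S_def using H0 by blast
  qed
  then show ?thesis unfolding ex_trace_def S_def[symmetric] using e0 by simp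
qed

theorem mainTheorem2:
  fixes t n :: nat
  assumes "t > 0" and "n > 0"
  shows "((t + 2) mod 6 = 0 \<and> (t + 2) dvd n \<longrightarrow>
            real (ex_trace 3 n (star_V t) (star_E t)) = real n / 6 * (real t ^ 2 - 2))
       \<and> (((t + 2) mod 6 = 1 \<or> (t + 2) mod 6 = 3) \<and> (t + 2) dvd n \<longrightarrow>
            real (ex_trace 3 n (star_V t) (star_E t)) = real n / 6 * (real t ^ 2 - 1))"
proof (intro conjI impI)
  define m where "m = t + 2"
  have tpos: "t > 0" by fact
  have C6: "6 * (m choose 3) = m*(t+1)*t" unfolding m_def using choose3 by simp
  {
    assume h: "(t + 2) mod 6 = 0 \<and> (t + 2) dvd n"
    have dvd: "m dvd n" using h m_def by simp
    define k where "k = m div 6"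
    have mk: "m = 6*k" using h m_def k_def by auto
    have k1: "k \<ge> 1" using mk m_def by simp
    obtain R where R: "finite R" "covers (6*k) R" "6 * card R \<le> (6*k)*(6*k)"
      using cover0[OF k1] by blast
    have t2: "2 \<le> t" using mk m_def k1 by linarith
    obtain s0 where "t = 2 + s0" using le_Suc_ex[OF t2] by blast
    then obtain s where s: "t = s + 2" by (simp add: add.commute)
    define X where "X = (t-1)*(t+1) - 1"
    have Xs: "X = s*s + 4*s + 2" unfolding X_def s by (simp add: algebra_simps)
    have "\<exists>H. uniform_hypergraph n 3 H \<and> \<not> contains_trace H (star_V t) (star_E t)
            \<and> (n div m) * ((m choose 3) - card R) \<le> card H"
      by (rule lower[OF m_def dvd tpos _ R(1)]) (use R(2) mk in \<open>simp add: covers_def\<close>)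
    then obtain H where H: "uniform_hypergraph n 3 H" "\<not> contains_trace H (star_V t) (star_E t)"
      "(n div m) * ((m choose 3) - card R) \<le> card H" by blast
    have "n*X \<le> 6*((n div m)*((m choose 3) - card R))"
    proof (rule final_arith)
      show "6 * (m choose 3) = m*X + m*m" by (subst C6) (simp add: Xs m_def s algebra_simps)
      show "6 * card R \<le> m*m" using R(3) mk by simp
      show "n = (n div m) * m" using dvd by simp
    qed
    then have low: "n*X \<le> 6 * card H" using H(3) by linarith
    have "6 * ex_trace 3 n (star_V t) (star_E t) = n*X"
    proof (rule ex_eq)
      fix H assume "uniform_hypergraph n 3 H" "\<not> contains_trace H (star_V t) (star_E t)"
      moreover have "even t" using s mk m_def by presburger
      ultimately show "6 * card H \<le> n * X" unfolding X_def using upper(2)[OF _ _ tpos] by blast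
    next
      show "\<exists>H. uniform_hypergraph n 3 H \<and> \<not> contains_trace H (star_V t) (star_E t) \<and> n*X \<le> 6 * card H"
        using H low by blast
    qed
    then have "6 * real (ex_trace 3 n (star_V t) (star_E t)) = real n * real X"
      by (metis of_nat_mult of_nat_numeral)
    moreover have "real X = real t ^ 2 - 2" unfolding Xs s by (simp add: algebra_simps power2_eq_square)
    ultimately show "real (ex_trace 3 n (star_V t) (star_E t)) = real n / 6 * (real t ^ 2 - 2)"
      by simp
  }
  {
    assume h: "((t + 2) mod 6 = 1 \<or> (t + 2) mod 6 = 3) \<and> (t + 2) dvd n"
    have dvd: "m dvd n" using h m_def by simp
    obtain R where R: "finite R" "covers m R" "6 * card R \<le> m*(m-1)"
    proof (cases "(t + 2) mod 6 = 1")
      case True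
      define k where "k = m div 6"
      have hm: "m mod 6 = 1" using True m_def by simp
      have "6*(m div 6) + m mod 6 = m" by (rule mult_div_mod_eq)
      then have mk: "m = 6*k+1" using hm k_def by linarith
      have k1: "k \<ge> 1" using mk m_def by simp
      obtain R where "finite R" "covers (6*k+1) R" "6 * card R \<le> (6*k+1)*(6*k)"
        using skolem[OF k1] by blast
      then show ?thesis using that mk by simp
    next
      case False
      then have m3: "m mod 6 = 3" using h m_def by simp
      define q where "q = m div 3"
      have mq: "m = 3*q" using m3 q_def by presburger
      have oq: "odd q" using m3 mq by presburger
      obtain R where "finite R" "covers (3*q) R" "6 * card R \<le> (3*q)*(3*q-1)"
        using bose[OF oq] by blast
      then show ?thesis using that mq by simp
    qed
    obtain s where s: "t = s + 1" using tpos by (metis Suc_eq_plus1 gr0_implies_Suc)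
    define X where "X = (t-1)*(t+1)"
    have Xs: "X = s*s + 2*s" unfolding X_def s by (simp add: algebra_simps)
    have "\<exists>H. uniform_hypergraph n 3 H \<and> \<not> contains_trace H (star_V t) (star_E t)
            \<and> (n div m) * ((m choose 3) - card R) \<le> card H"
      by (rule lower[OF m_def dvd tpos _ R(1)]) (use R(2) in \<open>simp add: covers_def\<close>)
    then obtain H where H: "uniform_hypergraph n 3 H" "\<not> contains_trace H (star_V t) (star_E t)"
      "(n div m) * ((m choose 3) - card R) \<le> card H" by blast
    have "n*X \<le> 6*((n div m)*((m choose 3) - card R))"
    proof (rule final_arith)
      show "6 * (m choose 3) = m*X + m*(m-1)" by (subst C6) (simp add: Xs m_def s algebra_simps)
      show "6 * card R \<le> m*(m-1)" using R(3) by simp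
      show "n = (n div m) * m" using dvd by simp
    qed
    then have low: "n*X \<le> 6 * card H" using H(3) by linarith
    have "6 * ex_trace 3 n (star_V t) (star_E t) = n*X"
    proof (rule ex_eq)
      fix H assume "uniform_hypergraph n 3 H" "\<not> contains_trace H (star_V t) (star_E t)"
      then show "6 * card H \<le> n * X" unfolding X_def using upper(1)[OF _ _ tpos] by blast
    next
      show "\<exists>H. uniform_hypergraph n 3 H \<and> \<not> contains_trace H (star_V t) (star_E t) \<and> n*X \<le> 6 * card H"
        using H low by blast
    qed
    then have "6 * real (ex_trace 3 n (star_V t) (star_E t)) = real n * real X"
      by (metis of_nat_mult of_nat_numeral)
    moreover have "real X = real t ^ 2 - 1" unfolding Xs s by (simp add: algebra_simps power2_eq_square)
    ultimately show "real (ex_trace 3 n (star_V t) (star_E t)) = real n / 6 * (real t ^ 2 - 1)"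
      by simp
  }
qed

end
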